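(* Let $G$ be a cubic graph (multigraphs allowed) with cyclic connectivity $k$, and let $G'$ arise from $G$ by an I-extension, with $e$ the edge added in the I-extension. Then the cyclic connectivity of $G'$ is either at least $k$ or equal to the length of a shortest cycle of $G'$ containing $e$. In particular, if $k\ge 4$ and $e$ lies in neither a triangle nor a pair of parallel edges of $G'$, then the cyclic connectivity of $G'$ is at least $4$.
   Context: An I-extension of a graph consists of subdividing two edges (possibly the same edge twice, in which case a parallel edge is created) by inserting a new vertex of degree $2$ into each, and joining the two new vertices by a new edge $e$. An edge cut is cycle-separating if its removal leaves at least two components containing cycles; the cyclic connectivity of a graph is the minimum size of a cycle-separating edge cut. *)

theory Defs
  imports Main "HOL-Library.Extended_Nat"
begin

text \<open>Finite loopless multigraphs: vertex set V, edge set E and an incidence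
  map inc assigning to each edge its two-element set of end vertices.
  Parallel edges are allowed (distinct edges with equal inc).\<close>

definition multigraph :: "'v set \<Rightarrow> 'e set \<Rightarrow> ('e \<Rightarrow> 'v set) \<Rightarrow> bool" where
  "multigraph V E inc \<longleftrightarrow> finite V \<and> finite E \<and>
     (\<forall>e\<in>E. inc e \<subseteq> V \<and> card (inc e) = 2)"

definition degree :: "'v set \<Rightarrow> 'e set \<Rightarrow> ('e \<Rightarrow> 'v set) \<Rightarrow> 'v \<Rightarrow> nat" where
  "degree V E inc v = card {e\<in>E. v \<in> inc e}"

definition cubic :: "'v set \<Rightarrow> 'e set \<Rightarrow> ('e \<Rightarrow> 'v set) \<Rightarrow> bool" where
  "cubic V E inc \<longleftrightarrow> multigraph V E inc \<and> (\<forall>v\<in>V. degree V E inc v = 3)"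

definition is_cycle :: "'v set \<Rightarrow> 'e set \<Rightarrow> ('e \<Rightarrow> 'v set) \<Rightarrow> 'v list \<Rightarrow> 'e list \<Rightarrow> bool" where
  "is_cycle V E inc vs es \<longleftrightarrow> length vs = length es \<and> length es \<ge> 2 \<and>
     distinct vs \<and> distinct es \<and> set vs \<subseteq> V \<and> set es \<subseteq> E \<and>
     (\<forall>i < length es. inc (es ! i) = {vs ! i, vs ! ((i + 1) mod length es)})"

definition connected_in :: "'v set \<Rightarrow> 'e set \<Rightarrow> ('e \<Rightarrow> 'v set) \<Rightarrow> 'v \<Rightarrow> 'v \<Rightarrow> bool" where
  "connected_in V E inc u w \<longleftrightarrow> u \<in> V \<and> w \<in> V \<and>
     (\<lambda>a b. \<exists>e\<in>E. inc e = {a, b})\<^sup>*\<^sup>* u w"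

definition edge_cut :: "'v set \<Rightarrow> 'e set \<Rightarrow> ('e \<Rightarrow> 'v set) \<Rightarrow> 'e set \<Rightarrow> bool" where
  "edge_cut V E inc S \<longleftrightarrow> (\<exists>X. X \<subseteq> V \<and> X \<noteq> {} \<and> X \<noteq> V \<and>
     S = {e\<in>E. card (inc e \<inter> X) = 1})"

definition cycle_separating :: "'v set \<Rightarrow> 'e set \<Rightarrow> ('e \<Rightarrow> 'v set) \<Rightarrow> 'e set \<Rightarrow> bool" where
  "cycle_separating V E inc S \<longleftrightarrow> edge_cut V E inc S \<and>
     (\<exists>vs1 es1 vs2 es2. is_cycle V (E - S) inc vs1 es1 \<and> is_cycle V (E - S) inc vs2 es2 \<and>
        \<not> connected_in V (E - S) inc (hd vs1) (hd vs2))"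

text \<open>Cyclic connectivity: minimum size of a cycle-separating edge cut
  (\<infinity> if there is none).\<close>

definition cyclic_connectivity :: "'v set \<Rightarrow> 'e set \<Rightarrow> ('e \<Rightarrow> 'v set) \<Rightarrow> enat" where
  "cyclic_connectivity V E inc = (INF S \<in> {S. cycle_separating V E inc S}. enat (card S))"

text \<open>Length of a shortest cycle containing edge e (\<infinity> if there is none).\<close>

definition shortest_cycle_through :: "'v set \<Rightarrow> 'e set \<Rightarrow> ('e \<Rightarrow> 'v set) \<Rightarrow> 'e \<Rightarrow> enat" where
  "shortest_cycle_through V E inc e =
     (INF es \<in> {es. \<exists>vs. is_cycle V E inc vs es \<and> e \<in> set es}. enat (length es))"

definition subdivide ::
  "'v set \<Rightarrow> 'e set \<Rightarrow> ('e \<Rightarrow> 'v set) \<Rightarrow> 'e \<Rightarrow> 'v \<Rightarrow>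
   'v set \<Rightarrow> 'e set \<Rightarrow> ('e \<Rightarrow> 'v set) \<Rightarrow> bool" where
  "subdivide V E inc a x V' E' inc' \<longleftrightarrow> a \<in> E \<and> x \<notin> V \<and>
     (\<exists>f1 f2 u w. inc a = {u, w} \<and> f1 \<notin> E \<and> f2 \<notin> E \<and> f1 \<noteq> f2 \<and>
        V' = insert x V \<and> E' = (E - {a}) \<union> {f1, f2} \<and>
        inc' f1 = {u, x} \<and> inc' f2 = {x, w} \<and> (\<forall>g \<in> E - {a}. inc' g = inc g))"

text \<open>I-extension: subdivide an edge by x, then subdivide an edge of the result by y
  (an edge of the original graph other than the first one, or one of the two halves
  of the first one, which amounts to subdividing the same edge twice), then join
  x and y by a new edge e.\<close>

definition I_extension ::
  "'v set \<Rightarrow> 'e set \<Rightarrow> ('e \<Rightarrow> 'v set) \<Rightarrow>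
   'v set \<Rightarrow> 'e set \<Rightarrow> ('e \<Rightarrow> 'v set) \<Rightarrow> 'e \<Rightarrow> bool" where
  "I_extension V E inc V' E' inc' e \<longleftrightarrow>
     (\<exists>a x V1 E1 inc1 b y V2 E2 inc2.
        subdivide V E inc a x V1 E1 inc1 \<and> subdivide V1 E1 inc1 b y V2 E2 inc2 \<and>
        e \<notin> E2 \<and> V' = V2 \<and> E' = insert e E2 \<and> inc' e = {x, y} \<and>
        (\<forall>g\<in>E2. inc' g = inc2 g))"

end

theory Submission
  imports Defs
begin

definition dl :: "'e set \<Rightarrow> ('e \<Rightarrow> 'v set) \<Rightarrow> 'v set \<Rightarrow> 'e set" where
  "dl E inc W = {g\<in>E. card (inc g \<inter> W) = 1}"

definition hc :: "'v set \<Rightarrow> 'e set \<Rightarrow> ('e \<Rightarrow> 'v set) \<Rightarrow> 'v set \<Rightarrow> bool" where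
  "hc V E inc W \<longleftrightarrow> (\<exists>vs es. is_cycle V E inc vs es \<and> set vs \<subseteq> W)"

definition ccut :: "'v set \<Rightarrow> 'e set \<Rightarrow> ('e \<Rightarrow> 'v set) \<Rightarrow> 'v set \<Rightarrow> bool" where
  "ccut V E inc X \<longleftrightarrow> X \<subseteq> V \<and> hc V E inc X \<and> hc V E inc (V - X)"

lemma Inf_enat_attain:
  assumes "(INF x\<in>A. (f x :: enat)) = enat c"
  shows "\<exists>x\<in>A. f x = enat c"
proof -
  have ne: "f ` A \<noteq> {}" using assms by (auto simp: Inf_enat_def)
  then have "(LEAST y. y \<in> f ` A) \<in> f ` A" by (metis LeastI_ex ex_in_conv)
  then show ?thesis using assms ne by (auto simp: Inf_enat_def)
qed

lemma card2_cases:
  assumes "p \<noteq> q"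
  shows "card ({p, q} \<inter> W) = 1 \<longleftrightarrow> (p \<in> W \<longleftrightarrow> q \<notin> W)"
  using assms by (cases "p \<in> W"; cases "q \<in> W") (auto simp: Int_insert_left)

lemma cycle_mono:
  "is_cycle V E inc vs es \<Longrightarrow> set vs \<subseteq> V' \<Longrightarrow> set es \<subseteq> E' \<Longrightarrow> is_cycle V' E' inc vs es"
  by (auto simp: is_cycle_def)

lemma cycle_adj_ne:
  assumes "is_cycle V E inc vs es" "i < length es"
  shows "vs ! i \<noteq> vs ! ((i + 1) mod length es)"
proof -
  have n: "length vs = length es" "length es \<ge> 2" "distinct vs" using assms by (auto simp: is_cycle_def)
  have "(i + 1) mod length es \<noteq> i"
  proof (cases "i + 1 < length es")
    case True then show ?thesis by simp
  next
    case False then have "i + 1 = length es" using assms by simp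
    then show ?thesis using n by simp
  qed
  moreover have "0 < length es" using n by linarith
  then have "(i + 1) mod length es < length vs" using n by simp
  ultimately show ?thesis using n assms(2) by (simp add: nth_eq_iff_index_eq)
qed

lemma cycle_edge_sub:
  assumes "is_cycle V E inc vs es" "g \<in> set es"
  shows "inc g \<subseteq> set vs"
proof -
  obtain i where i: "i < length es" "g = es ! i" using assms(2) by (auto simp: in_set_conv_nth)
  have "0 < length es" using assms(1) unfolding is_cycle_def by linarith
  then show ?thesis using assms(1) i by (auto simp: is_cycle_def intro!: nth_mem)
qed

lemma rtranclp_sym_rel:
  assumes "\<And>a b. R a b \<Longrightarrow> R b a" "R\<^sup>*\<^sup>* a b"
  shows "R\<^sup>*\<^sup>* b a"
  using assms(2) by induction (auto intro: converse_rtranclp_into_rtranclp assms(1))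

lemma ccut_sep:
  assumes mg: "multigraph V E inc" and c: "ccut V E inc X"
  shows "cycle_separating V E inc (dl E inc X)"
proof -
  obtain vs1 es1 vs2 es2 where c1: "is_cycle V E inc vs1 es1" "set vs1 \<subseteq> X"
    and c2: "is_cycle V E inc vs2 es2" "set vs2 \<subseteq> V - X" and XV: "X \<subseteq> V"
    using c by (auto simp: ccut_def hc_def)
  have ne1: "vs1 \<noteq> []" using c1 by (auto simp: is_cycle_def)
  have ne2: "vs2 \<noteq> []" using c2 by (auto simp: is_cycle_def)
  have h1: "hd vs1 \<in> X" using ne1 c1 hd_in_set by auto
  have h2: "hd vs2 \<notin> X" using ne2 c2 hd_in_set by fastforce
  have "X \<noteq> {}" using h1 by auto
  moreover have "X \<noteq> V" using h2 ne2 c2 hd_in_set by fastforce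
  ultimately have cut: "edge_cut V E inc (dl E inc X)" using XV by (auto simp: edge_cut_def dl_def)
  have cyc1: "is_cycle V (E - dl E inc X) inc vs1 es1"
  proof -
    have "set es1 \<subseteq> E - dl E inc X"
    proof
      fix g assume g: "g \<in> set es1"
      then have "g \<in> E" using c1 by (auto simp: is_cycle_def)
      moreover have "inc g \<subseteq> X" using cycle_edge_sub[OF c1(1) g] c1(2) by auto
      ultimately show "g \<in> E - dl E inc X" using mg by (auto simp: dl_def multigraph_def Int_absorb2)
    qed
    then show ?thesis using c1 by (auto simp: is_cycle_def)
  qed
  have cyc2: "is_cycle V (E - dl E inc X) inc vs2 es2"
  proof -
    have "set es2 \<subseteq> E - dl E inc X"
    proof
      fix g assume g: "g \<in> set es2"
      then have "g \<in> E" using c2 by (auto simp: is_cycle_def)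
      moreover have "inc g \<inter> X = {}" using cycle_edge_sub[OF c2(1) g] c2(2) by auto
      ultimately show "g \<in> E - dl E inc X" by (auto simp: dl_def)
    qed
    then show ?thesis using c2 by (auto simp: is_cycle_def)
  qed
  have pres: "b \<in> X" if "(\<lambda>a b. \<exists>e\<in>E - dl E inc X. inc e = {a, b})\<^sup>*\<^sup>* a b" "a \<in> X" for a b
    using that
  proof induction
    case base then show ?case .
  next
    case (step b c)
    then obtain g where g: "g \<in> E" "g \<notin> dl E inc X" "inc g = {b, c}" by auto
    have "b \<noteq> c" using g mg by (auto simp: multigraph_def)
    then show ?case using g step card2_cases[of b c X] by (auto simp: dl_def)
  qed
  have "\<not> connected_in V (E - dl E inc X) inc (hd vs1) (hd vs2)"
    using pres h1 h2 by (auto simp: connected_in_def)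
  then show ?thesis using cut cyc1 cyc2 by (auto simp: cycle_separating_def)
qed

lemma cc_le:
  assumes "multigraph V E inc" "ccut V E inc X"
  shows "cyclic_connectivity V E inc \<le> enat (card (dl E inc X))"
  unfolding cyclic_connectivity_def
  by (rule INF_lower) (use ccut_sep[OF assms] in auto)

lemma cycle_conn:
  assumes c: "is_cycle V E' inc vs es" and j: "j < length vs"
  shows "(\<lambda>a b. \<exists>e\<in>E'. inc e = {a, b})\<^sup>*\<^sup>* (vs ! 0) (vs ! j)"
  using j
proof (induction j)
  case 0 then show ?case by simp
next
  case (Suc j)
  have n: "length vs = length es" "Suc j < length es" using c Suc by (auto simp: is_cycle_def)
  then have "inc (es ! j) = {vs ! j, vs ! (Suc j)}" "es ! j \<in> E'" using c by (auto simp: is_cycle_def)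
  then show ?case using Suc by (auto intro: rtranclp.rtrancl_into_rtrancl)
qed

lemma sep_ccut:
  assumes mg: "multigraph V E inc" and cs: "cycle_separating V E inc S"
  shows "\<exists>X. ccut V E inc X \<and> card (dl E inc X) \<le> card S"
proof -
  obtain X0 where X0: "S = {e\<in>E. card (inc e \<inter> X0) = 1}" using cs by (auto simp: cycle_separating_def edge_cut_def)
  obtain vs1 es1 vs2 es2 where c1: "is_cycle V (E - S) inc vs1 es1" and c2: "is_cycle V (E - S) inc vs2 es2"
    and nc: "\<not> connected_in V (E - S) inc (hd vs1) (hd vs2)" using cs by (auto simp: cycle_separating_def)
  define R where "R = (\<lambda>a b. \<exists>e\<in>E - S. inc e = {a, b})"
  have Rsym: "R a b \<Longrightarrow> R b a" for a b by (auto simp: R_def insert_commute)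
  define K where "K = {v. connected_in V (E - S) inc (hd vs1) v}"
  have ne1: "vs1 \<noteq> []" using c1 by (auto simp: is_cycle_def)
  have ne2: "vs2 \<noteq> []" using c2 by (auto simp: is_cycle_def)
  have KV: "K \<subseteq> V" by (auto simp: K_def connected_in_def)
  have hd1: "hd vs1 = vs1 ! 0" "hd vs2 = vs2 ! 0" using ne1 ne2 by (auto simp: hd_conv_nth)
  have sv1: "set vs1 \<subseteq> V" "set vs2 \<subseteq> V" using c1 c2 by (auto simp: is_cycle_def)
  have s1: "set vs1 \<subseteq> K"
  proof
    fix v assume "v \<in> set vs1"
    then obtain j where j: "j < length vs1" "v = vs1 ! j" by (auto simp: in_set_conv_nth)
    then show "v \<in> K" using cycle_conn[OF c1 j(1)] hd1 sv1 ne1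
      by (auto simp: K_def connected_in_def)
  qed
  have s2: "set vs2 \<subseteq> V - K"
  proof
    fix v assume v: "v \<in> set vs2"
    then obtain j where j: "j < length vs2" "v = vs2 ! j" by (auto simp: in_set_conv_nth)
    have r: "R\<^sup>*\<^sup>* (vs2 ! 0) (vs2 ! j)" using cycle_conn[OF c2 j(1)] by (simp add: R_def)
    have "v \<notin> K"
    proof
      assume "v \<in> K"
      then have "R\<^sup>*\<^sup>* (hd vs1) v" by (auto simp: K_def connected_in_def R_def)
      moreover have "R\<^sup>*\<^sup>* v (hd vs2)" using rtranclp_sym_rel[of R, OF Rsym r] j hd1 by simp
      ultimately have "R\<^sup>*\<^sup>* (hd vs1) (hd vs2)" by simp
      then show False using nc ne1 ne2 sv1 hd_in_set by (auto simp: connected_in_def R_def)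
    qed
    then show "v \<in> V - K" using v sv1 by auto
  qed
  have dsub: "dl E inc K \<subseteq> S"
  proof
    fix g assume g: "g \<in> dl E inc K"
    then have gE: "g \<in> E" "card (inc g \<inter> K) = 1" by (auto simp: dl_def)
    obtain p q where pq: "inc g = {p, q}" "p \<noteq> q" using gE mg by (auto simp: multigraph_def card_2_iff)
    have pqV: "p \<in> V" "q \<in> V" using gE pq mg by (auto simp: multigraph_def)
    show "g \<in> S"
    proof (rule ccontr)
      assume "g \<notin> S"
      then have "R p q" "R q p" using gE pq by (auto simp: R_def insert_commute)
      moreover have KR: "K = {v. hd vs1 \<in> V \<and> v \<in> V \<and> R\<^sup>*\<^sup>* (hd vs1) v}"
        by (simp add: K_def connected_in_def R_def)
      ultimately have "p \<in> K \<longleftrightarrow> q \<in> K" using pqV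
        by (auto intro: rtranclp.rtrancl_into_rtrancl)
      then show False using gE pq card2_cases[OF pq(2), of K] by auto
    qed
  qed
  have fS: "finite S" using X0 mg by (auto simp: multigraph_def)
  have "ccut V E inc K"
  proof -
    have "is_cycle V E inc vs1 es1" "is_cycle V E inc vs2 es2" using c1 c2 by (auto simp: is_cycle_def)
    then show ?thesis using s1 s2 KV by (auto simp: ccut_def hc_def)
  qed
  then show ?thesis using dsub fS by (auto intro: card_mono)
qed

lemma cc_attain:
  assumes mg: "multigraph V E inc" and cc: "cyclic_connectivity V E inc = enat c"
  shows "\<exists>X. ccut V E inc X \<and> card (dl E inc X) = c"
proof -
  obtain S where "cycle_separating V E inc S" "enat (card S) = enat c"
    using Inf_enat_attain[OF cc[unfolded cyclic_connectivity_def]] by auto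
  then obtain X where X: "ccut V E inc X" "card (dl E inc X) \<le> c" using sep_ccut[OF mg] by fastforce
  have "enat c \<le> enat (card (dl E inc X))" using cc_le[OF mg X(1)] cc by simp
  then show ?thesis using X by auto
qed

lemma card_filter_sum: "finite A \<Longrightarrow> card {x\<in>A. P x} = (\<Sum>x\<in>A. if P x then 1 else 0)"
  by (simp add: sum.inter_filter[symmetric])

lemma deg_sum:
  assumes mg: "multigraph V E inc" and W: "W \<subseteq> V" and d3: "\<forall>v\<in>W. degree V E inc v = 3"
  shows "3 * card W = 2 * card {g\<in>E. inc g \<subseteq> W} + card (dl E inc W)"
proof -
  have fE: "finite E" and fV: "finite V" using mg by (auto simp: multigraph_def)
  have fW: "finite W" using W fV finite_subset by auto
  have "3 * card W = (\<Sum>v\<in>W. degree V E inc v)" using d3 by simp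
  also have "\<dots> = (\<Sum>v\<in>W. \<Sum>g\<in>E. if v \<in> inc g then 1 else 0)"
    by (simp add: degree_def card_filter_sum[OF fE])
  also have "\<dots> = (\<Sum>g\<in>E. \<Sum>v\<in>W. if v \<in> inc g then 1 else 0)" by (rule sum.swap)
  also have "\<dots> = (\<Sum>g\<in>E. card (inc g \<inter> W))"
  proof (rule sum.cong)
    fix g assume "g \<in> E"
    have "{v\<in>W. v \<in> inc g} = inc g \<inter> W" by auto
    then show "(\<Sum>v\<in>W. if v \<in> inc g then 1 else 0) = card (inc g \<inter> W)"
      using card_filter_sum[OF fW, of "\<lambda>v. v \<in> inc g"] by simp
  qed simp
  also have "\<dots> = (\<Sum>g\<in>E. 2 * (if inc g \<subseteq> W then 1 else 0) + (if card (inc g \<inter> W) = 1 then 1 else 0))"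
  proof (rule sum.cong)
    fix g assume g: "g \<in> E"
    then have c2: "card (inc g) = 2" using mg by (auto simp: multigraph_def)
    then have fi: "finite (inc g)" by (metis card.infinite zero_neq_numeral)
    have le: "card (inc g \<inter> W) \<le> 2" using card_mono[OF fi, of "inc g \<inter> W"] c2 by auto
    have "card (inc g \<inter> W) = 2 \<longleftrightarrow> inc g \<subseteq> W"
    proof
      assume "card (inc g \<inter> W) = 2"
      then have "inc g \<inter> W = inc g" using c2 fi by (metis Int_lower1 card_subset_eq)
      then show "inc g \<subseteq> W" by auto
    next
      assume "inc g \<subseteq> W" then show "card (inc g \<inter> W) = 2" using c2 by (simp add: Int_absorb2)
    qed
    then show "card (inc g \<inter> W) = 2 * (if inc g \<subseteq> W then 1 else 0) + (if card (inc g \<inter> W) = 1 then 1 else 0)"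
      using le by auto
  qed simp
  also have "\<dots> = 2 * card {g\<in>E. inc g \<subseteq> W} + card (dl E inc W)"
    by (simp add: sum.distrib sum_distrib_left[symmetric] card_filter_sum[OF fE] dl_def)
  finally show ?thesis .
qed

lemma dl_compl:
  assumes mg: "multigraph V E inc"
  shows "dl E inc (V - X) = dl E inc X"
proof -
  have "card (inc g \<inter> (V - X)) = 1 \<longleftrightarrow> card (inc g \<inter> X) = 1" if g: "g \<in> E" for g
  proof -
    obtain p q where pq: "inc g = {p, q}" "p \<noteq> q" using g mg by (auto simp: multigraph_def card_2_iff)
    have "p \<in> V" "q \<in> V" using g pq mg by (auto simp: multigraph_def)
    then show ?thesis using card2_cases[OF pq(2), of X] card2_cases[OF pq(2), of "V - X"] pq by auto
  qed
  then show ?thesis by (auto simp: dl_def)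
qed

lemma cycle_len_card:
  assumes "is_cycle V E inc vs es"
  shows "card (set vs) = length es" "card (set es) = length es"
proof -
  have "length vs = length es" "distinct vs" "distinct es" using assms by (auto simp: is_cycle_def)
  then show "card (set vs) = length es" "card (set es) = length es" by (simp_all add: distinct_card)
qed

lemma cycle_dl_le:
  assumes mg: "multigraph V E inc" and d3: "\<forall>v\<in>V. degree V E inc v = 3"
    and c: "is_cycle V E inc vs es"
  shows "card (dl E inc (set vs)) \<le> length es"
proof -
  have sV: "set vs \<subseteq> V" using c by (auto simp: is_cycle_def)
  have fE: "finite E" using mg by (auto simp: multigraph_def)
  have "set es \<subseteq> {g\<in>E. inc g \<subseteq> set vs}" using c cycle_edge_sub[OF c] by (auto simp: is_cycle_def)
  then have "card (set es) \<le> card {g\<in>E. inc g \<subseteq> set vs}"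
    using card_mono[of "{g\<in>E. inc g \<subseteq> set vs}"] fE by simp
  then have le: "length es \<le> card {g\<in>E. inc g \<subseteq> set vs}" using cycle_len_card[OF c] by simp
  have "3 * card (set vs) = 2 * card {g\<in>E. inc g \<subseteq> set vs} + card (dl E inc (set vs))"
    using deg_sum[OF mg sV] d3 sV by blast
  then show ?thesis using le cycle_len_card[OF c] by linarith
qed



definition pth :: "'v set \<Rightarrow> 'e set \<Rightarrow> ('e \<Rightarrow> 'v set) \<Rightarrow> 'v list \<Rightarrow> 'e list \<Rightarrow> bool" where
  "pth W F inc vs es \<longleftrightarrow> length vs = Suc (length es) \<and> distinct vs \<and> distinct es \<and>
     set vs \<subseteq> W \<and> set es \<subseteq> F \<and> (\<forall>i<length es. inc (es ! i) = {vs ! i, vs ! Suc i})"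

lemma cyc_exists:
  assumes fW: "finite W" and fF: "finite F" and ne: "W \<noteq> {}"
    and Fi: "\<forall>g\<in>F. inc g \<subseteq> W \<and> card (inc g) = 2"
    and d2: "\<forall>v\<in>W. 2 \<le> card {g\<in>F. v \<in> inc g}"
  shows "\<exists>vs es. is_cycle W F inc vs es"
proof -
  define Ls where "Ls = {length vs | vs. \<exists>es. pth W F inc vs es}"
  have Lb: "Ls \<subseteq> {..card W}"
  proof
    fix l assume "l \<in> Ls"
    then obtain vs es where "l = length vs" "pth W F inc vs es" by (auto simp: Ls_def)
    then have "l = card (set vs)" "set vs \<subseteq> W" by (auto simp: pth_def distinct_card)
    then show "l \<in> {..card W}" using card_mono[OF fW] by auto
  qed
  then have fL: "finite Ls" using finite_subset by blast
  obtain v where v: "v \<in> W" using ne by auto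
  have "pth W F inc [v] []" using v by (simp add: pth_def)
  then have "1 \<in> Ls" by (force simp: Ls_def)
  then have "Max Ls \<in> Ls" using fL Max_in by blast
  then obtain vs es where p: "pth W F inc vs es" and lm: "length vs = Max Ls" by (auto simp: Ls_def)
  have maxp: "length vs' \<le> length vs" if "pth W F inc vs' es'" for vs' es'
    using that lm fL by (auto simp: Ls_def intro!: Max_ge)
  have pl: "length vs = Suc (length es)" "distinct vs" "distinct es" "set vs \<subseteq> W" "set es \<subseteq> F"
    "\<forall>i<length es. inc (es ! i) = {vs ! i, vs ! Suc i}" using p by (auto simp: pth_def)
  define v0 where "v0 = vs ! 0"
  have v0W: "v0 \<in> W" using pl by (auto simp: v0_def)
  have d: "2 \<le> card {g\<in>F. v0 \<in> inc g}" using d2 v0W by auto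
  have other: "\<exists>w. inc g = {v0, w} \<and> w \<noteq> v0 \<and> w \<in> W" if "g \<in> F" "v0 \<in> inc g" for g
  proof -
    have "card (inc g) = 2" using that Fi by auto
    then obtain p q where pq: "inc g = {p, q}" "p \<noteq> q" by (meson card_2_iff)
    have "p \<in> W" "q \<in> W" using that pq Fi by auto
    then show ?thesis using pq that by (auto simp: insert_commute)
  qed
  have notin: "g \<notin> set es" if "g \<noteq> es ! 0" "v0 \<in> inc g" for g
  proof
    assume "g \<in> set es"
    then obtain i where i: "i < length es" "g = es ! i" by (auto simp: in_set_conv_nth)
    have "inc (es ! i) = {vs ! i, vs ! Suc i}" using pl(6) i(1) by blast
    then have "v0 = vs ! i \<or> v0 = vs ! Suc i" using that(2) i(2) by blast
    moreover have "Suc i < length vs" "0 < length vs" using pl(1) i(1) by simp_all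
    ultimately have "i = 0" using pl(2) unfolding v0_def by (metis nth_eq_iff_index_eq Suc_lessD nat.distinct(1))
    then show False using i(2) that(1) by simp
  qed
  show ?thesis
  proof (cases "es = []")
    case True
    have "{g\<in>F. v0 \<in> inc g} \<noteq> {}"
    proof
      assume "{g\<in>F. v0 \<in> inc g} = {}"
      with d show False by simp
    qed
    then obtain g where g: "g \<in> F" "v0 \<in> inc g" by blast
    obtain w where w: "inc g = {v0, w}" "w \<noteq> v0" "w \<in> W" using other[OF g] by blast
    have "vs = [v0]" using True pl by (cases vs) (auto simp: v0_def)
    then have "pth W F inc [w, v0] [g]" using w g v0W by (auto simp: pth_def insert_commute)
    then show ?thesis using maxp \<open>vs = [v0]\<close> by fastforce
  next
    case False
    have "\<exists>g\<in>F. v0 \<in> inc g \<and> g \<noteq> es ! 0"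
    proof (rule ccontr)
      assume "\<not> ?thesis"
      then have "{g\<in>F. v0 \<in> inc g} \<subseteq> {es ! 0}" by auto
      then have "card {g\<in>F. v0 \<in> inc g} \<le> 1" using card_mono[of "{es ! 0}"] by simp
      then show False using d by simp
    qed
    then obtain g where g: "g \<in> F" "v0 \<in> inc g" "g \<noteq> es ! 0" by blast
    obtain w where w: "inc g = {v0, w}" "w \<noteq> v0" "w \<in> W" using other[OF g(1,2)] by blast
    have gn: "g \<notin> set es" using notin g by auto
    show ?thesis
    proof (cases "w \<in> set vs")
      case False
      have "pth W F inc (w # vs) (g # es)"
      proof -
        have "inc ((g # es) ! i) = {(w # vs) ! i, (w # vs) ! Suc i}" if "i < length (g # es)" for i
        proof (cases i)
          case 0 then show ?thesis using w pl False by (auto simp: v0_def insert_commute)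
        next
          case (Suc j) then show ?thesis using that pl by auto
        qed
        then show ?thesis using pl False gn w g by (auto simp: pth_def)
      qed
      then show ?thesis using maxp by fastforce
    next
      case True
      then obtain j where j: "j < length vs" "w = vs ! j" by (auto simp: in_set_conv_nth)
      have j0: "j \<noteq> 0"
      proof
        assume "j = 0"
        then have "w = v0" using j by (simp add: v0_def)
        then show False using w(2) by simp
      qed
      define vs' where "vs' = take (Suc j) vs"
      define es' where "es' = take j es @ [g]"
      have lv: "length vs' = Suc j" "length es' = Suc j" using j pl by (auto simp: vs'_def es'_def)
      have "is_cycle W F inc vs' es'"
        unfolding is_cycle_def
      proof (intro conjI)
        show "length vs' = length es'" using lv by simp
        show "2 \<le> length es'" using lv j0 by simp
        show "distinct vs'" using pl by (simp add: vs'_def)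
        show "distinct es'" using pl(3) gn by (auto simp: es'_def dest: in_set_takeD)
        show "set vs' \<subseteq> W" using pl(4) by (auto simp: vs'_def dest: in_set_takeD)
        show "set es' \<subseteq> F" using pl(5) g(1) by (auto simp: es'_def dest: in_set_takeD)
        show "\<forall>i<length es'. inc (es' ! i) = {vs' ! i, vs' ! ((i + 1) mod length es')}"
        proof (intro allI impI)
          fix i assume i: "i < length es'"
          show "inc (es' ! i) = {vs' ! i, vs' ! ((i + 1) mod length es')}"
          proof (cases "i < j")
            case True
            then have "es' ! i = es ! i" "vs' ! i = vs ! i" "vs' ! (Suc i) = vs ! Suc i"
              "(i + 1) mod length es' = Suc i"
              using lv j pl(1) True by (auto simp: es'_def vs'_def nth_append)
            moreover have "i < length es" using True j pl(1) by simp
            then have "inc (es ! i) = {vs ! i, vs ! Suc i}" using pl(6) by blast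
            ultimately show ?thesis by simp
          next
            case False
            then have "i = j" using i lv by simp
            then have "es' ! i = g" "vs' ! i = w" "(i + 1) mod length es' = 0" "vs' ! 0 = v0"
              using lv j pl(1) by (auto simp: es'_def vs'_def nth_append v0_def)
            then show ?thesis using w by (auto simp: insert_commute)
          qed
        qed
      qed
      then show ?thesis by blast
    qed
  qed
qed

lemma forest_bound:
  assumes "finite W" "W \<noteq> {}" "finite F" "\<forall>g\<in>F. inc g \<subseteq> W \<and> card (inc g) = 2"
    "\<not> (\<exists>vs es. is_cycle W F inc vs es)"
  shows "card F < card W"
  using assms
proof (induction "card W" arbitrary: W F rule: less_induct)
  case less
  show ?case
  proof (cases "\<forall>v\<in>W. 2 \<le> card {g\<in>F. v \<in> inc g}")
    case True
    then show ?thesis using cyc_exists[of W F inc] less.prems by blast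
  next
    case False
    then obtain v where v: "v \<in> W" "card {g\<in>F. v \<in> inc g} \<le> 1" by force
    define W' where "W' = W - {v}"
    define F' where "F' = {g\<in>F. v \<notin> inc g}"
    have FF: "F = F' \<union> {g\<in>F. v \<in> inc g}" by (auto simp: F'_def)
    have cF: "card F \<le> card F' + 1"
      using FF card_Un_le[of F' "{g\<in>F. v \<in> inc g}"] v(2) by simp
    show ?thesis
    proof (cases "W' = {}")
      case True
      then have "W = {v}" using v W'_def by auto
      have "F = {}"
      proof (rule ccontr)
        assume "F \<noteq> {}"
        then obtain g where g: "g \<in> F" by auto
        then have "inc g \<subseteq> {v}" "card (inc g) = 2" using less.prems \<open>W = {v}\<close> by auto
        then show False using card_mono[of "{v}" "inc g"] by simp
      qed
      then show ?thesis using \<open>W = {v}\<close> by simp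
    next
      case False
      have lt: "card W' < card W" using v less.prems(1) card_gt_0_iff[of W] by (auto simp: W'_def)
      have "card F' < card W'"
      proof (rule less.hyps[OF lt])
        show "finite W'" using less.prems by (simp add: W'_def)
        show "W' \<noteq> {}" by fact
        show "finite F'" using less.prems by (simp add: F'_def)
        show "\<forall>g\<in>F'. inc g \<subseteq> W' \<and> card (inc g) = 2" using less.prems by (auto simp: F'_def W'_def)
        show "\<not> (\<exists>vs es. is_cycle W' F' inc vs es)"
        proof
          assume "\<exists>vs es. is_cycle W' F' inc vs es"
          then obtain vs es where "is_cycle W' F' inc vs es" by blast
          then have "is_cycle W F inc vs es" by (auto simp: is_cycle_def W'_def F'_def)
          then show False using less.prems by blast
        qed
      qed
      moreover have "card W = card W' + 1" using v less.prems(1) card_gt_0_iff[of W] by (auto simp: W'_def)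
      ultimately show ?thesis using cF by simp
    qed
  qed
qed



lemma cycle_rotate:
  assumes c: "is_cycle V E inc vs es"
  shows "is_cycle V E inc (rotate m vs) (rotate m es)"
proof -
  have l: "length vs = length es" "2 \<le> length es" using c by (auto simp: is_cycle_def)
  define n where "n = length es"
  have n0: "0 < n" using l unfolding n_def by linarith
  have "inc (rotate m es ! i) = {rotate m vs ! i, rotate m vs ! ((i + 1) mod n)}" if i: "i < n" for i
  proof -
    have k: "(m + i) mod n < n" using n0 by simp
    have "inc (es ! ((m + i) mod n)) = {vs ! ((m + i) mod n), vs ! (((m + i) mod n + 1) mod n)}"
      using c k by (auto simp: is_cycle_def n_def)
    moreover have "((m + i) mod n + 1) mod n = (m + (i + 1) mod n) mod n" by (simp add: mod_simps)
    moreover have "(i + 1) mod n < n" using n0 by simp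
    ultimately show ?thesis using i l by (simp add: nth_rotate n_def)
  qed
  then show ?thesis using c by (auto simp: is_cycle_def n_def)
qed

lemma sub_facts:
  assumes s: "subdivide V E inc a x V1 E1 inc1" and mg: "multigraph V E inc"
  obtains f1 f2 u w where "a \<in> E" "x \<notin> V" "inc a = {u, w}" "u \<noteq> w" "u \<in> V" "w \<in> V"
    "f1 \<notin> E" "f2 \<notin> E" "f1 \<noteq> f2" "V1 = insert x V" "E1 = (E - {a}) \<union> {f1, f2}"
    "inc1 f1 = {u, x}" "inc1 f2 = {x, w}" "\<forall>g \<in> E - {a}. inc1 g = inc g"
proof -
  obtain f1 f2 u w where h: "a \<in> E" "x \<notin> V" "inc a = {u, w}" "f1 \<notin> E" "f2 \<notin> E" "f1 \<noteq> f2"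
    "V1 = insert x V" "E1 = (E - {a}) \<union> {f1, f2}"
    "inc1 f1 = {u, x}" "inc1 f2 = {x, w}" "\<forall>g \<in> E - {a}. inc1 g = inc g"
    using s by (auto simp: subdivide_def)
  have "card (inc a) = 2" "inc a \<subseteq> V" using mg h(1) by (auto simp: multigraph_def)
  then have "u \<noteq> w" "u \<in> V" "w \<in> V" using h(3) by auto
  then show ?thesis using that h by blast
qed

lemma sub_mg:
  assumes s: "subdivide V E inc a x V1 E1 inc1" and mg: "multigraph V E inc"
  shows "multigraph V1 E1 inc1" "\<forall>v\<in>V. degree V1 E1 inc1 v = degree V E inc v"
    "degree V1 E1 inc1 x = 2" "V1 = insert x V" "x \<notin> V"
proof -
  obtain f1 f2 u w where h: "a \<in> E" "x \<notin> V" "inc a = {u, w}" "u \<noteq> w" "u \<in> V" "w \<in> V"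
    "f1 \<notin> E" "f2 \<notin> E" "f1 \<noteq> f2" "V1 = insert x V" "E1 = (E - {a}) \<union> {f1, f2}"
    "inc1 f1 = {u, x}" "inc1 f2 = {x, w}" "\<forall>g \<in> E - {a}. inc1 g = inc g"
    by (rule sub_facts[OF s mg])
  have fV: "finite V" "finite E" using mg by (auto simp: multigraph_def)
  have ux: "u \<noteq> x" "w \<noteq> x" using h by auto
  show "multigraph V1 E1 inc1"
    using mg h ux fV by (auto simp: multigraph_def)
  show "V1 = insert x V" "x \<notin> V" using h by auto
  define B where "B v = {g\<in>E - {a}. v \<in> inc g}" for v
  have fB: "finite (B v)" for v using fV by (simp add: B_def)
  have nB: "a \<notin> B v" "f1 \<notin> B v" "f2 \<notin> B v" for v using h by (auto simp: B_def)
  have xE: "x \<notin> inc g" if "g \<in> E" for g using that mg h(2) by (auto simp: multigraph_def)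
  show "\<forall>v\<in>V. degree V1 E1 inc1 v = degree V E inc v"
  proof
    fix v assume v: "v \<in> V"
    have e1: "{g\<in>E1. v \<in> inc1 g} = B v \<union> (if v = u then {f1} else {}) \<union> (if v = w then {f2} else {})"
      using h v by (auto simp: B_def)
    have e0: "{g\<in>E. v \<in> inc g} = B v \<union> (if v = u \<or> v = w then {a} else {})"
      using h v by (auto simp: B_def)
    show "degree V1 E1 inc1 v = degree V E inc v"
      unfolding degree_def e1 e0 using fB nB h(4,9) by (auto simp: card_insert_if)
  qed
  have "{g\<in>E1. x \<in> inc1 g} = {f1, f2}" using h xE by auto
  then show "degree V1 E1 inc1 x = 2" using h(9) by (simp add: degree_def)
qed

lemma sub_cut:
  assumes s: "subdivide V E inc a x V1 E1 inc1" and mg: "multigraph V E inc"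
  shows "card (dl E inc W) \<le> card (dl E1 inc1 W)"
proof -
  obtain f1 f2 u w where h: "a \<in> E" "x \<notin> V" "inc a = {u, w}" "u \<noteq> w" "u \<in> V" "w \<in> V"
    "f1 \<notin> E" "f2 \<notin> E" "f1 \<noteq> f2" "V1 = insert x V" "E1 = (E - {a}) \<union> {f1, f2}"
    "inc1 f1 = {u, x}" "inc1 f2 = {x, w}" "\<forall>g \<in> E - {a}. inc1 g = inc g"
    by (rule sub_facts[OF s mg])
  have fE: "finite E" using mg by (auto simp: multigraph_def)
  have ux: "u \<noteq> x" "x \<noteq> w" using h by auto
  define hf where "hf g = (if g = a then (if card (inc1 f1 \<inter> W) = 1 then f1 else f2) else g)" for g
  have "inj_on hf (dl E inc W)" using h by (auto simp: inj_on_def hf_def dl_def split: if_splits)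
  moreover have "hf ` dl E inc W \<subseteq> dl E1 inc1 W"
  proof
    fix g' assume "g' \<in> hf ` dl E inc W"
    then obtain g where g: "g \<in> dl E inc W" "g' = hf g" by auto
    show "g' \<in> dl E1 inc1 W"
    proof (cases "g = a")
      case True
      then have "card ({u, w} \<inter> W) = 1" using g h by (simp add: dl_def)
      then have "u \<in> W \<longleftrightarrow> w \<notin> W" using card2_cases[OF h(4)] by simp
      then have "card ({u, x} \<inter> W) = 1 \<or> card ({x, w} \<inter> W) = 1"
        using card2_cases[OF ux(1), of W] card2_cases[OF ux(2), of W] by blast
      then show ?thesis using True g h by (auto simp: hf_def dl_def)
    next
      case False
      then show ?thesis using g h by (auto simp: hf_def dl_def)
    qed
  qed
  moreover have "finite (dl E1 inc1 W)" using fE h by (simp add: dl_def)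
  ultimately show ?thesis by (metis card_inj_on_le)
qed

lemma sub_cycle:
  assumes s: "subdivide V E inc a x V1 E1 inc1" and mg: "multigraph V E inc"
    and c: "is_cycle V1 E1 inc1 vs es"
  shows "\<exists>vs' es'. is_cycle V E inc vs' es' \<and> set vs' \<subseteq> set vs"
proof -
  obtain f1 f2 u w where h: "a \<in> E" "x \<notin> V" "inc a = {u, w}" "u \<noteq> w" "u \<in> V" "w \<in> V"
    "f1 \<notin> E" "f2 \<notin> E" "f1 \<noteq> f2" "V1 = insert x V" "E1 = (E - {a}) \<union> {f1, f2}"
    "inc1 f1 = {u, x}" "inc1 f2 = {x, w}" "\<forall>g \<in> E - {a}. inc1 g = inc g"
    by (rule sub_facts[OF s mg])
  have xE: "x \<notin> inc g" if "g \<in> E" for g using that mg h(2) by (auto simp: multigraph_def)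
  have ux: "u \<noteq> x" "w \<noteq> x" using h by auto
  have xedge: "g \<in> {f1, f2}" if "g \<in> E1" "x \<in> inc1 g" for g
    using that h xE by auto
  show ?thesis
  proof (cases "x \<in> set vs")
    case False
    have "set es \<subseteq> E - {a}"
    proof
      fix g assume g: "g \<in> set es"
      then have "inc1 g \<subseteq> set vs" using cycle_edge_sub[OF c] by blast
      then have "x \<notin> inc1 g" using False by auto
      moreover have "g \<in> E1" using g c by (auto simp: is_cycle_def)
      ultimately show "g \<in> E - {a}" using h by auto
    qed
    then have "is_cycle V E inc vs es" using c h False
      by (auto simp: is_cycle_def subset_iff)
    then show ?thesis by blast
  next
    case True
    define n where "n = length es"
    have l: "length vs = n" "2 \<le> n" using c by (auto simp: is_cycle_def n_def)
    obtain j where j: "j < n" "vs ! j = x" using True l by (auto simp: in_set_conv_nth)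
    define m where "m = (j + 1) mod n"
    define rv where "rv = rotate m vs"
    define re where "re = rotate m es"
    have rc: "is_cycle V1 E1 inc1 rv re" using cycle_rotate[OF c] by (simp add: rv_def re_def)
    have rl: "length rv = n" "length re = n" using l by (simp_all add: rv_def re_def n_def)
    have "rv ! (n - 1) = vs ! ((m + (n - 1)) mod n)" using l by (simp add: rv_def nth_rotate)
    moreover have "(m + (n - 1)) mod n = j"
    proof -
      have "(m + (n - 1)) mod n = (j + 1 + (n - 1)) mod n" by (simp add: m_def mod_simps)
      also have "j + 1 + (n - 1) = j + n" using l by simp
      finally show ?thesis using j by simp
    qed
    ultimately have rx: "rv ! (n - 1) = x" using j by simp
    have rd: "distinct rv" "distinct re" "set rv \<subseteq> V1" "set re \<subseteq> E1"
      "\<forall>i<n. inc1 (re ! i) = {rv ! i, rv ! ((i + 1) mod n)}" using rc rl by (auto simp: is_cycle_def)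
    define p where "p = rv ! (n - 2)"
    define q where "q = rv ! 0"
    have e1: "inc1 (re ! (n - 2)) = {p, x}"
    proof -
      have "(n - 2 + 1) mod n = n - 1" using l by simp
      then show ?thesis using rd(5) l rx by (auto simp: p_def)
    qed
    have e2: "inc1 (re ! (n - 1)) = {x, q}"
    proof -
      have "(n - 1 + 1) mod n = 0" using l by simp
      then show ?thesis using rd(5) l rx by (auto simp: q_def)
    qed
    have inE1: "re ! (n - 2) \<in> E1" "re ! (n - 1) \<in> E1" using rd(4) rl l by auto
    have ne: "re ! (n - 2) \<noteq> re ! (n - 1)" using rd(2) rl l by (simp add: nth_eq_iff_index_eq)
    have ff: "{re ! (n - 2), re ! (n - 1)} = {f1, f2}"
      using xedge[OF inE1(1)] xedge[OF inE1(2)] e1 e2 ne by auto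
    have px: "p \<noteq> x"
    proof -
      have a: "n - 2 \<noteq> n - 1" "n - 2 < length rv" "n - 1 < length rv" using l rl by auto
      show ?thesis using a rd(1) rx nth_eq_iff_index_eq[of rv "n - 2" "n - 1"] by (auto simp: p_def)
    qed
    have qx: "q \<noteq> x"
    proof -
      have a: "0 \<noteq> n - 1" "0 < length rv" "n - 1 < length rv" using l rl by auto
      show ?thesis using a rd(1) rx nth_eq_iff_index_eq[of rv 0 "n - 1"] by (auto simp: q_def)
    qed
    have pq: "{p, q} = {u, w}"
    proof (cases "re ! (n - 2) = f1")
      case True
      then have "re ! (n - 1) = f2" using ff ne h(9) by (auto simp: doubleton_eq_iff)
      then show ?thesis using True e1 e2 h(12,13) px qx ux by (auto simp: doubleton_eq_iff)
    next
      case False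
      then have "re ! (n - 2) = f2" "re ! (n - 1) = f1" using ff ne h(9) by (auto simp: doubleton_eq_iff)
      then show ?thesis using e1 e2 h(12,13) px qx ux by (auto simp: doubleton_eq_iff)
    qed
    have n3: "3 \<le> n"
    proof (rule ccontr)
      assume "\<not> 3 \<le> n"
      then have "n = 2" using l by simp
      then have "p = q" by (simp add: p_def q_def)
      then show False using pq h(4) by (auto simp: doubleton_eq_iff)
    qed
    define vs' where "vs' = take (n - 1) rv"
    define es' where "es' = take (n - 2) re @ [a]"
    have lv: "length vs' = n - 1" "length es' = n - 1" using rl n3 by (auto simp: vs'_def es'_def)
    have tk: "g \<in> E - {a}" if gt: "g \<in> set (take (n - 2) re)" for g
    proof -
      obtain i where i0: "i < length (take (n - 2) re)" "take (n - 2) re ! i = g"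
        using gt by (auto simp: in_set_conv_nth)
      then have i: "i < n - 2" "g = re ! i" using rl by auto
      have "g \<in> E1" using i rd(4) rl by auto
      moreover have "g \<noteq> re ! (n - 2)" "g \<noteq> re ! (n - 1)" using i rd(2) rl by (auto simp: nth_eq_iff_index_eq)
      ultimately show ?thesis using ff h by auto
    qed
    have xv: "x \<notin> set vs'"
    proof
      assume "x \<in> set vs'"
      then obtain i where i: "i < n - 1" "rv ! i = x" using rl by (auto simp: vs'_def in_set_conv_nth)
      moreover have "i < length rv" "n - 1 < length rv" using i rl l by auto
      ultimately show False using rx rd(1) nth_eq_iff_index_eq[of rv i "n - 1"] by auto
    qed
    have "is_cycle V E inc vs' es'"
      unfolding is_cycle_def
    proof (intro conjI)
      show "length vs' = length es'" using lv by simp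
      show "2 \<le> length es'" using lv n3 by simp
      show "distinct vs'" using rd(1) by (simp add: vs'_def)
      show "distinct es'" using rd(2) tk by (auto simp: es'_def)
      show "set vs' \<subseteq> V" using rd(3) xv h(10) by (auto simp: vs'_def dest: in_set_takeD)
      show "set es' \<subseteq> E" using tk h(1) by (auto simp: es'_def)
      show "\<forall>i<length es'. inc (es' ! i) = {vs' ! i, vs' ! ((i + 1) mod length es')}"
      proof (intro allI impI)
        fix i assume i: "i < length es'"
        show "inc (es' ! i) = {vs' ! i, vs' ! ((i + 1) mod length es')}"
        proof (cases "i < n - 2")
          case True
          then have a1: "es' ! i = re ! i" "vs' ! i = rv ! i" "vs' ! (i + 1) = rv ! (i + 1)"
            "(i + 1) mod length es' = i + 1" "(i + 1) mod n = i + 1"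
            using lv rl n3 by (auto simp: es'_def vs'_def nth_append)
          have "re ! i \<in> set (take (n - 2) re)" using True rl by (auto simp: in_set_conv_nth)
          then have "inc (re ! i) = inc1 (re ! i)" using tk h(14) by auto
          moreover have "inc1 (re ! i) = {rv ! i, rv ! ((i + 1) mod n)}" using rd(5) True by auto
          ultimately show ?thesis using a1 by simp
        next
          case False
          then have "i = n - 2" using i lv by simp
          then have "es' ! i = a" "vs' ! i = p" "(i + 1) mod length es' = 0" "vs' ! 0 = q"
            using lv rl n3 by (auto simp: es'_def vs'_def nth_append p_def q_def)
          then show ?thesis using pq h(3) by simp
        qed
      qed
    qed
    moreover have "set vs' \<subseteq> set vs" by (auto simp: vs'_def rv_def dest: in_set_takeD)
    ultimately show ?thesis by blast
  qed
qed

lemma main_side: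
  assumes cub: "cubic V E inc" and ZV: "Z \<subseteq> V" and hZ: "hc V E inc Z" and hB: "hc V E inc (V - Z)"
    and nz: "\<forall>vs es. is_cycle V E inc vs es \<longrightarrow> set vs \<subseteq> Z \<longrightarrow> e \<in> set es"
    and mn: "\<forall>X. ccut V E inc X \<longrightarrow> s \<le> card (dl E inc X)"
    and sZ: "s = card (dl E inc Z)"
  shows "enat s = shortest_cycle_through V E inc e"
proof -
  have mg: "multigraph V E inc" and d3: "\<forall>v\<in>V. degree V E inc v = 3" using cub by (auto simp: cubic_def)
  have fV: "finite V" and fE: "finite E" using mg by (auto simp: multigraph_def)
  have Ei: "\<forall>g\<in>E. inc g \<subseteq> V \<and> card (inc g) = 2" using mg by (auto simp: multigraph_def)
  obtain vsD esD where D: "is_cycle V E inc vsD esD" "set vsD \<subseteq> Z" using hZ by (auto simp: hc_def)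
  have eD: "e \<in> set esD" using nz D by blast
  define Cy where "Cy = {es. \<exists>vs. is_cycle V E inc vs es \<and> e \<in> set es}"
  have SCd: "shortest_cycle_through V E inc e = (INF es\<in>Cy. enat (length es))"
    by (simp add: shortest_cycle_through_def Cy_def)
  have "esD \<in> Cy" using D eD by (auto simp: Cy_def)
  then have "shortest_cycle_through V E inc e \<le> enat (length esD)" unfolding SCd by (rule INF_lower)
  then obtain l0 where l0: "shortest_cycle_through V E inc e = enat l0"
    by (cases "shortest_cycle_through V E inc e") auto
  obtain es0 where "es0 \<in> Cy" "enat (length es0) = enat l0"
    using Inf_enat_attain[of "\<lambda>es. length es" Cy l0] l0 SCd by auto
  then obtain vs0 where C0: "is_cycle V E inc vs0 es0" "length es0 = l0" by (auto simp: Cy_def)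
  have minl: "l0 \<le> length es" if "is_cycle V E inc vs es" "e \<in> set es" for vs es
  proof -
    have "es \<in> Cy" using that by (auto simp: Cy_def)
    then have "shortest_cycle_through V E inc e \<le> enat (length es)" unfolding SCd by (rule INF_lower)
    then show ?thesis using l0 by simp
  qed
  have l02: "2 \<le> l0" using C0 by (auto simp: is_cycle_def)
  have fZ: "finite Z" using ZV fV finite_subset by blast
  have Zne: "Z \<noteq> {}" using D by (auto simp: is_cycle_def)
  have Zs: "card Z \<le> s"
  proof -
    define F where "F = {g\<in>E. inc g \<subseteq> Z} - {e}"
    have fF: "finite F" using fE by (simp add: F_def)
    have Fi: "\<forall>g\<in>F. inc g \<subseteq> Z \<and> card (inc g) = 2" using Ei by (auto simp: F_def)
    have nc: "\<not> (\<exists>vs es. is_cycle Z F inc vs es)"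
    proof
      assume "\<exists>vs es. is_cycle Z F inc vs es"
      then obtain vs es where c: "is_cycle Z F inc vs es" by blast
      then have "is_cycle V E inc vs es" "set vs \<subseteq> Z" "set es \<subseteq> F"
        using ZV by (auto simp: is_cycle_def F_def)
      then show False using nz by (auto simp: F_def)
    qed
    have "card F < card Z" by (rule forest_bound[OF fZ Zne fF Fi nc])
    moreover have "card {g\<in>E. inc g \<subseteq> Z} \<le> card F + 1"
    proof -
      have "{g\<in>E. inc g \<subseteq> Z} \<subseteq> insert e F" by (auto simp: F_def)
      then have "card {g\<in>E. inc g \<subseteq> Z} \<le> card (insert e F)" using fF by (simp add: card_mono)
      also have "\<dots> \<le> card F + 1" using fF by (simp add: card_insert_if)
      finally show ?thesis .
    qed
    moreover have "3 * card Z = 2 * card {g\<in>E. inc g \<subseteq> Z} + s"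
      using deg_sum[OF mg ZV] d3 ZV sZ by auto
    ultimately show ?thesis by linarith
  qed
  have l0Z: "l0 \<le> card Z"
  proof -
    have "l0 \<le> length esD" using minl D eD by blast
    also have "\<dots> = card (set vsD)" using cycle_len_card[OF D(1)] by simp
    also have "\<dots> \<le> card Z" using D(2) fZ by (simp add: card_mono)
    finally show ?thesis .
  qed
  have sB: "s \<le> card (V - Z)"
  proof -
    obtain vs2 es2 where c2: "is_cycle V E inc vs2 es2" "set vs2 \<subseteq> V - Z" using hB by (auto simp: hc_def)
    have "set vsD \<subseteq> V - set vs2" using D c2 ZV by auto
    then have "ccut V E inc (set vs2)"
      unfolding ccut_def hc_def using c2 D by blast
    then have "s \<le> card (dl E inc (set vs2))" using mn by blast
    also have "\<dots> \<le> length es2" by (rule cycle_dl_le[OF mg d3 c2(1)])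
    also have "\<dots> = card (set vs2)" using cycle_len_card[OF c2(1)] by simp
    also have "\<dots> \<le> card (V - Z)" using c2(2) fV by (simp add: card_mono)
    finally show ?thesis .
  qed
  have cV: "card V = card Z + card (V - Z)" using ZV fV fZ by (simp add: card_Diff_subset card_mono)
  define R0 where "R0 = set vs0"
  have R0V: "R0 \<subseteq> V" using C0 by (auto simp: R0_def is_cycle_def)
  have cR0: "card R0 = l0" using cycle_len_card[OF C0(1)] C0(2) by (simp add: R0_def)
  have dR0: "card (dl E inc R0) \<le> l0" using cycle_dl_le[OF mg d3 C0(1)] C0(2) by (simp add: R0_def)
  show ?thesis
  proof (cases "hc V E inc (V - R0)")
    case True
    have "ccut V E inc R0" unfolding ccut_def using True R0V C0 by (auto simp: hc_def R0_def)
    then have "s \<le> l0" using mn dR0 by fastforce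
    then have "s = l0" using Zs l0Z by simp
    then show ?thesis using l0 by simp
  next
    case False
    define R where "R = V - R0"
    have fR: "finite R" using fV by (simp add: R_def)
    have cR: "card R = card V - l0" using R0V fV cR0 finite_subset[OF R0V fV] by (simp add: R_def card_Diff_subset)
    have Rs: "s \<le> card R" using cR cV Zs l0Z sB by linarith
    have Rne: "R \<noteq> {}" using Rs Zs l0Z l02 by auto
    define F where "F = {g\<in>E. inc g \<subseteq> R}"
    have fF: "finite F" using fE by (simp add: F_def)
    have Fi: "\<forall>g\<in>F. inc g \<subseteq> R \<and> card (inc g) = 2" using Ei by (auto simp: F_def)
    have nc: "\<not> (\<exists>vs es. is_cycle R F inc vs es)"
    proof
      assume "\<exists>vs es. is_cycle R F inc vs es"
      then obtain vs es where c: "is_cycle R F inc vs es" by blast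
      then have "is_cycle V E inc vs es" "set vs \<subseteq> V - R0"
        by (auto simp: is_cycle_def F_def R_def)
      then show False using False by (auto simp: hc_def)
    qed
    have "card F < card R" by (rule forest_bound[OF fR Rne fF Fi nc])
    moreover have "3 * card R = 2 * card F + card (dl E inc R)"
      using deg_sum[OF mg, of R] d3 by (auto simp: R_def F_def)
    moreover have "dl E inc R = dl E inc R0" using dl_compl[OF mg, of R0] by (simp add: R_def)
    then have "card (dl E inc R) \<le> l0" using dR0 by simp
    ultimately have False using Rs Zs l0Z by linarith
    then show ?thesis ..
  qed
qed

lemma add_edge_degree:
  assumes "e \<notin> E2" "\<forall>g\<in>E2. inc' g = inc2 g" "finite E2"
  shows "degree V' (insert e E2) inc' v = degree V2 E2 inc2 v + (if v \<in> inc' e then 1 else 0)"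
proof -
  have "{g\<in>insert e E2. v \<in> inc' g} = {g\<in>E2. v \<in> inc2 g} \<union> (if v \<in> inc' e then {e} else {})"
    using assms by auto
  then show ?thesis using assms by (simp add: degree_def)
qed

theorem lemma5:
  fixes V V' :: "'v set" and E E' :: "'e set"
    and inc inc' :: "'e \<Rightarrow> 'v set" and e :: 'e and k :: nat
  assumes "cubic V E inc"
    and "cyclic_connectivity V E inc = enat k"
    and "I_extension V E inc V' E' inc' e"
  shows "(cyclic_connectivity V' E' inc' \<ge> enat k \<or>
          cyclic_connectivity V' E' inc' = shortest_cycle_through V' E' inc' e)
       \<and> ((k \<ge> 4 \<and>
           \<not> (\<exists>vs es. is_cycle V' E' inc' vs es \<and> length es = 3 \<and> e \<in> set es) \<and>
           \<not> (\<exists>f\<in>E'. f \<noteq> e \<and> inc' f = inc' e))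
          \<longrightarrow> cyclic_connectivity V' E' inc' \<ge> 4)"
proof -
  note cub = assms(1) and ccG = assms(2)
  obtain a x V1 E1 inc1 b y V2 E2 inc2 where s1: "subdivide V E inc a x V1 E1 inc1"
    and s2: "subdivide V1 E1 inc1 b y V2 E2 inc2" and eE2: "e \<notin> E2" and V'd: "V' = V2"
    and E'd: "E' = insert e E2" and ince: "inc' e = {x, y}" and inc2e: "\<forall>g\<in>E2. inc' g = inc2 g"
    using assms(3) unfolding I_extension_def by blast
  have mg: "multigraph V E inc" and d3: "\<forall>v\<in>V. degree V E inc v = 3" using cub by (auto simp: cubic_def)
  note m1 = sub_mg[OF s1 mg]
  note m2 = sub_mg[OF s2 m1(1)]
  have fE2: "finite E2" "finite V2" using m2(1) by (auto simp: multigraph_def)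
  have xy: "x \<noteq> y" "x \<in> V2" "y \<in> V2" using m1(4) m2(4,5) by auto
  have mg': "multigraph V' E' inc'"
    using m2(1) xy fE2 inc2e ince by (auto simp: multigraph_def V'd E'd)
  have cub': "cubic V' E' inc'"
    unfolding cubic_def
  proof (intro conjI ballI mg')
    fix v assume v: "v \<in> V'"
    have dg: "degree V' E' inc' v = degree V2 E2 inc2 v + (if v \<in> {x, y} then 1 else 0)"
      using add_edge_degree[OF eE2 inc2e fE2(1)] ince by (simp add: E'd)
    show "degree V' E' inc' v = 3"
    proof (cases "v = y")
      case True then show ?thesis using dg m2(3) by simp
    next
      case False
      then have vV1: "v \<in> V1" using v V'd m2(4) by auto
      then have d21: "degree V2 E2 inc2 v = degree V1 E1 inc1 v" using m2(2) by blast
      show ?thesis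
      proof (cases "v = x")
        case True then show ?thesis using dg d21 m1(3) by simp
      next
        case False
        then have "v \<in> V" using vV1 m1(4) by auto
        then show ?thesis using dg d21 m1(2) d3 False \<open>v \<noteq> y\<close> by auto
      qed
    qed
  qed
  have VV': "V \<subseteq> V'" using m1(4) m2(4) V'd by auto
  have cyc_map: "\<exists>vs' es'. is_cycle V E inc vs' es' \<and> set vs' \<subseteq> set vs"
    if c: "is_cycle V' E' inc' vs es" and ne: "e \<notin> set es" for vs es
  proof -
    have sE: "set es \<subseteq> E2" using c ne by (auto simp: is_cycle_def E'd)
    have "inc2 (es ! i) = inc' (es ! i)" if "i < length es" for i
      using that sE inc2e nth_mem by (metis subsetD)
    then have "is_cycle V2 E2 inc2 vs es" using c sE by (auto simp: is_cycle_def V'd)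
    then obtain vs1 es1 where c1: "is_cycle V1 E1 inc1 vs1 es1" "set vs1 \<subseteq> set vs"
      using sub_cycle[OF s2 m1(1)] by blast
    then obtain vs0 es0 where "is_cycle V E inc vs0 es0" "set vs0 \<subseteq> set vs1"
      using sub_cycle[OF s1 mg] by blast
    then show ?thesis using c1 by blast
  qed
  have cut_map: "card (dl E inc W) \<le> card (dl E' inc' W)" for W
  proof -
    have "dl E2 inc2 W \<subseteq> dl E' inc' W" using inc2e by (auto simp: dl_def E'd)
    moreover have "finite (dl E' inc' W)" using fE2 by (simp add: dl_def E'd)
    ultimately have "card (dl E2 inc2 W) \<le> card (dl E' inc' W)" by (simp add: card_mono)
    then show ?thesis using sub_cut[OF s1 mg, of W] sub_cut[OF s2 m1(1), of W] by linarith
  qed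
  have dlV: "dl E inc (W \<inter> V) = dl E inc W" for W
  proof -
    have "inc g \<inter> (W \<inter> V) = inc g \<inter> W" if "g \<in> E" for g using that mg by (auto simp: multigraph_def)
    then show ?thesis by (auto simp: dl_def)
  qed
  define cc' where "cc' = cyclic_connectivity V' E' inc'"
  define SC where "SC = shortest_cycle_through V' E' inc' e"
  have P1: "enat k \<le> cc' \<or> cc' = SC"
  proof (cases "enat k \<le> cc'")
    case True then show ?thesis by simp
  next
    case False
    then obtain c where cc: "cc' = enat c" "c < k" by (cases cc') auto
    obtain A where A: "ccut V' E' inc' A" "card (dl E' inc' A) = c"
      using cc_attain[OF mg'] cc(1) by (auto simp: cc'_def)
    have mn: "\<forall>X. ccut V' E' inc' X \<longrightarrow> c \<le> card (dl E' inc' X)"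
      using cc_le[OF mg'] cc(1) by (auto simp: cc'_def)
    have kb: "k \<le> card (dl E inc Y)" if "ccut V E inc Y" for Y
      using cc_le[OF mg that] ccG by simp
    have AV: "A \<subseteq> V'" using A by (simp add: ccut_def)
    define hcE where "hcE W = (\<exists>vs es. is_cycle V' E' inc' vs es \<and> set vs \<subseteq> W \<and> e \<notin> set es)" for W
    have notboth: "\<not> (hcE A \<and> hcE (V' - A))"
    proof
      assume h: "hcE A \<and> hcE (V' - A)"
      then obtain vs1 es1 vs2 es2 where c1: "is_cycle V' E' inc' vs1 es1" "set vs1 \<subseteq> A" "e \<notin> set es1"
        and c2: "is_cycle V' E' inc' vs2 es2" "set vs2 \<subseteq> V' - A" "e \<notin> set es2"
        by (auto simp: hcE_def)
      obtain u1 f1 where d1: "is_cycle V E inc u1 f1" "set u1 \<subseteq> set vs1" using cyc_map[OF c1(1,3)] by blast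
      obtain u2 f2 where d2: "is_cycle V E inc u2 f2" "set u2 \<subseteq> set vs2" using cyc_map[OF c2(1,3)] by blast
      have "set u1 \<subseteq> A \<inter> V" "set u2 \<subseteq> V - A \<inter> V" using d1 d2 c1 c2 by (auto simp: is_cycle_def)
      then have "ccut V E inc (A \<inter> V)" using d1 d2 by (auto simp: ccut_def hc_def)
      then have "k \<le> card (dl E inc (A \<inter> V))" by (rule kb)
      also have "\<dots> = card (dl E inc A)" by (simp add: dlV)
      also have "\<dots> \<le> c" using cut_map[of A] A(2) by simp
      finally show False using cc(2) by simp
    qed
    have hA: "hc V' E' inc' A" "hc V' E' inc' (V' - A)" using A by (auto simp: ccut_def)
    show ?thesis
    proof (cases "hcE A")
      case False
      then have nz: "\<forall>vs es. is_cycle V' E' inc' vs es \<longrightarrow> set vs \<subseteq> A \<longrightarrow> e \<in> set es"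
        by (auto simp: hcE_def)
      have "enat c = SC" unfolding SC_def
        by (rule main_side[OF cub' AV hA nz mn A(2)[symmetric]])
      then show ?thesis using cc by simp
    next
      case True
      then have "\<not> hcE (V' - A)" using notboth by blast
      then have nz: "\<forall>vs es. is_cycle V' E' inc' vs es \<longrightarrow> set vs \<subseteq> V' - A \<longrightarrow> e \<in> set es"
        by (auto simp: hcE_def)
      have cmp: "V' - (V' - A) = A" using AV by auto
      have "card (dl E' inc' (V' - A)) = c" using dl_compl[OF mg', of A] A(2) by simp
      then have "enat c = SC" unfolding SC_def
        using main_side[OF cub', of "V' - A"] hA nz mn cmp by auto
      then show ?thesis using cc by simp
    qed
  qed
  have P2: "4 \<le> cc'"
    if k4: "k \<ge> 4" and nt: "\<not> (\<exists>vs es. is_cycle V' E' inc' vs es \<and> length es = 3 \<and> e \<in> set es)"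
      and np: "\<not> (\<exists>f\<in>E'. f \<noteq> e \<and> inc' f = inc' e)"
  proof (cases "enat k \<le> cc'")
    case True
    then show ?thesis using k4 by (metis enat_ord_simps(1) numeral_eq_enat order_trans)
  next
    case False
    then have "cc' = SC" using P1 by simp
    moreover have "4 \<le> SC" unfolding SC_def shortest_cycle_through_def
    proof (rule INF_greatest)
      fix es assume "es \<in> {es. \<exists>vs. is_cycle V' E' inc' vs es \<and> e \<in> set es}"
      then obtain vs where c: "is_cycle V' E' inc' vs es" "e \<in> set es" by auto
      have l2: "2 \<le> length es" using c by (auto simp: is_cycle_def)
      have l3: "length es \<noteq> 3" using nt c by blast
      have "length es \<noteq> 2"
      proof
        assume l: "length es = 2"
        have i0: "inc' (es ! 0) = {vs ! 0, vs ! 1}" using c l by (auto simp: is_cycle_def)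
        have i1: "inc' (es ! 1) = {vs ! 1, vs ! 0}" using c l by (auto simp: is_cycle_def)
        have ne: "es ! 0 \<noteq> es ! 1" using c l by (auto simp: is_cycle_def nth_eq_iff_index_eq)
        have inE: "es ! 0 \<in> E'" "es ! 1 \<in> E'" using c l by (auto simp: is_cycle_def)
        obtain i where i: "i < 2" "es ! i = e" using c(2) l by (auto simp: in_set_conv_nth)
        show False
        proof (cases "i = 0")
          case True
          then show False using np i i0 i1 ne inE by (auto simp: insert_commute)
        next
          case False
          then have "i = 1" using i by simp
          then show False using np i i0 i1 ne inE by (auto simp: insert_commute)
        qed
      qed
      then have "4 \<le> length es" using l2 l3 by simp
      then show "4 \<le> enat (length es)" by (simp add: numeral_eq_enat)
    qed
    ultimately show ?thesis by simp
  qed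
  show ?thesis using P1 P2 by (auto simp: cc'_def SC_def)
qed

end
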